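(* Let $a(x,\xi)$, $x,\xi\in\mathbb{R}^d$, be a smooth symbol of order zero and type $(1,0)$ which is compactly supported in $x$. Then for every $M>0$ there exists $C_M>0$ such that for all $\epsilon>0$, the $\epsilon$-separation rank $r_\epsilon$ of $a(x,\xi)$ with respect to the variables $x$ and $\xi$ obeys $r_\epsilon\le C_M\,\epsilon^{-1/M}$.
   Context: A smooth function $a(x,\xi)$ is a symbol of order zero and type $(1,0)$ if for every pair of multi-indices $(\alpha,\beta)$ there is a constant $C_{\alpha\beta}>0$ with $|\partial_\xi^\alpha\partial_x^\beta a(x,\xi)|\le C_{\alpha\beta}(1+|\xi|^2)^{-|\alpha|/2}$ for all $x,\xi$. For a function $f(x,\xi)$ and $\epsilon>0$, the $\epsilon$-separation rank is the smallest integer $r_\epsilon$ for which there exist functions $c_n(x)$, $d_n(\xi)$ ($0\le n\le r_\epsilon-1$) with $|f(x,\xi)-\sum_{n=0}^{r_\epsilon-1}c_n(x)d_n(\xi)|\le\epsilon$ for all $x,\xi$. *)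

theory Defs
  imports "HOL-Analysis.Analysis"
begin

definition dirderiv :: "'a::real_normed_vector \<Rightarrow> ('a \<Rightarrow> complex) \<Rightarrow> 'a \<Rightarrow> complex" where
  "dirderiv v g z = vector_derivative (\<lambda>t::real. g (z + t *\<^sub>R v)) (at 0)"

fun iter_dd :: "'a::real_normed_vector list \<Rightarrow> ('a \<Rightarrow> complex) \<Rightarrow> 'a \<Rightarrow> complex" where
  "iter_dd [] g = g"
| "iter_dd (v # vs) g = dirderiv v (iter_dd vs g)"

definition smooth_fun :: "('a::real_normed_vector \<Rightarrow> complex) \<Rightarrow> bool" where
  "smooth_fun g \<longleftrightarrow> (\<forall>vs. iter_dd vs g differentiable_on UNIV)"

text \<open>Mixed partial derivative of a(x,xi): first the x-derivatives in the coordinate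
  directions listed in bs, then the xi-derivatives in the directions listed in as.
  A multi-index is represented by a list of coordinate indices, its order |alpha| being
  the length of the list.\<close>
definition mixed_partial ::
  "'d list \<Rightarrow> 'd list \<Rightarrow> (real^'d::finite \<Rightarrow> real^'d \<Rightarrow> complex) \<Rightarrow> real^'d \<Rightarrow> real^'d \<Rightarrow> complex" where
  "mixed_partial as bs a x \<xi> =
     iter_dd (map (\<lambda>i. (0, axis i 1)) as @ map (\<lambda>i. (axis i 1, 0)) bs)
             (\<lambda>(y, \<eta>). a y \<eta>) (x, \<xi>)"

definition symbol_S0_10 :: "(real^'d::finite \<Rightarrow> real^'d \<Rightarrow> complex) \<Rightarrow> bool" where
  "symbol_S0_10 a \<longleftrightarrow> smooth_fun (\<lambda>(x, \<xi>). a x \<xi>) \<and>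
     (\<forall>as bs. \<exists>C>0. \<forall>x \<xi>. cmod (mixed_partial as bs a x \<xi>)
         \<le> C * (1 + norm \<xi> ^ 2) powr (- real (length as) / 2))"

definition compact_supp_x :: "('a::topological_space \<Rightarrow> 'b \<Rightarrow> complex) \<Rightarrow> bool" where
  "compact_supp_x a \<longleftrightarrow> (\<exists>K. compact K \<and> (\<forall>x \<xi>. x \<notin> K \<longrightarrow> a x \<xi> = 0))"

definition sep_approx :: "('a \<Rightarrow> 'b \<Rightarrow> complex) \<Rightarrow> real \<Rightarrow> nat \<Rightarrow> bool" where
  "sep_approx f \<epsilon> r \<longleftrightarrow> (\<exists>c d. \<forall>x \<xi>. cmod (f x \<xi> - (\<Sum>n<r. c n x * d n \<xi>)) \<le> \<epsilon>)"

definition sep_rank :: "('a \<Rightarrow> 'b \<Rightarrow> complex) \<Rightarrow> real \<Rightarrow> nat" where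
  "sep_rank f \<epsilon> = (LEAST r. sep_approx f \<epsilon> r)"

end

theory Submission
  imports Defs "HOL-Library.FuncSet"
begin


lemma dd_vd:
  fixes F :: "'a::real_normed_vector \<Rightarrow> complex"
  assumes "(F has_derivative F') (at (z + t0 *\<^sub>R v))"
  shows "((\<lambda>t::real. F (z + t *\<^sub>R v)) has_vector_derivative F' v) (at t0)"
proof -
  have l: "linear F'" using assms has_derivative_linear by blast
  have "((\<lambda>t::real. z + t *\<^sub>R v) has_derivative (\<lambda>s. s *\<^sub>R v)) (at t0)"
    by (auto intro!: derivative_eq_intros)
  from has_derivative_compose[OF this assms]
  have "((\<lambda>t::real. F (z + t *\<^sub>R v)) has_derivative (\<lambda>s. F' (s *\<^sub>R v))) (at t0)" by simp
  then show ?thesis unfolding has_vector_derivative_def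
    using linear_scale[OF l] by simp
qed

lemma dd_eq:
  fixes F :: "'a::real_normed_vector \<Rightarrow> complex"
  assumes "(F has_derivative F') (at z)"
  shows "dirderiv v F z = F' v"
  unfolding dirderiv_def
  by (rule vector_derivative_at, rule dd_vd) (use assms in simp)

lemma dd_sum:
  fixes f :: "'s \<Rightarrow> 'a::real_normed_vector \<Rightarrow> complex"
  assumes "finite S" "\<And>s. s \<in> S \<Longrightarrow> f s differentiable (at z)"
  shows "dirderiv v (\<lambda>y. \<Sum>s\<in>S. k s * f s y) z = (\<Sum>s\<in>S. k s * dirderiv v (f s) z)"
proof -
  obtain f' where f': "\<And>s. s \<in> S \<Longrightarrow> (f s has_derivative f' s) (at z)"
    using assms(2) unfolding differentiable_def by metis
  have "((\<lambda>y. \<Sum>s\<in>S. k s * f s y) has_derivative (\<lambda>h. \<Sum>s\<in>S. k s * f' s h)) (at z)"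
    by (intro has_derivative_sum has_derivative_mult_right f')
  then have "dirderiv v (\<lambda>y. \<Sum>s\<in>S. k s * f s y) z = (\<Sum>s\<in>S. k s * f' s v)"
    by (rule dd_eq)
  also have "\<dots> = (\<Sum>s\<in>S. k s * dirderiv v (f s) z)"
    by (intro sum.cong refl) (simp add: dd_eq[OF f'])
  finally show ?thesis .
qed

lemma dd_lin:
  fixes F :: "'a::real_normed_vector \<Rightarrow> complex"
  assumes "F differentiable (at z)" "finite I"
  shows "dirderiv (\<Sum>i\<in>I. c i *\<^sub>R b i) F z = (\<Sum>i\<in>I. complex_of_real (c i) * dirderiv (b i) F z)"
proof -
  obtain F' where F': "(F has_derivative F') (at z)"
    using assms(1) unfolding differentiable_def by metis
  have l: "linear F'" using F' has_derivative_linear by blast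
  have "F' (\<Sum>i\<in>I. c i *\<^sub>R b i) = (\<Sum>i\<in>I. F' (c i *\<^sub>R b i))" by (rule linear_sum[OF l])
  also have "\<dots> = (\<Sum>i\<in>I. complex_of_real (c i) * F' (b i))"
    using linear_scale[OF l] by (simp add: scaleR_conv_of_real)
  finally show ?thesis using dd_eq[OF F'] by simp
qed



abbreviation Edir :: "'d list \<Rightarrow> ((real^'d::finite) \<times> (real^'d)) list" where
  "Edir is \<equiv> map (\<lambda>i. (axis i 1, 0)) is"

lemma pair_expansion: "((u::real^'d::finite), 0::real^'d) = (\<Sum>i\<in>UNIV. (u$i) *\<^sub>R (axis i 1, 0::real^'d))"
proof -
  have "(\<Sum>i\<in>UNIV. (u$i) *\<^sub>R (axis i 1 :: real^'d)) = u"
    using basis_expansion[of u] by (simp add: scalar_mult_eq_scaleR)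
  then show ?thesis by (simp add: prod_eq_iff fst_sum snd_sum)
qed

lemma smooth_diff: "smooth_fun A \<Longrightarrow> iter_dd vs A differentiable (at z)"
  unfolding smooth_fun_def differentiable_on_def by auto

lemma expand:
  fixes A :: "((real^'d::finite) \<times> (real^'d)) \<Rightarrow> complex"
  assumes sm: "smooth_fun A"
  shows "iter_dd (replicate k (u, 0)) A z =
    (\<Sum>is\<in>{is. set is \<subseteq> UNIV \<and> length is = k}.
        complex_of_real (\<Prod>i\<leftarrow>is. u$i) * iter_dd (Edir is) A z)"
proof (induction k arbitrary: z)
  case 0
  then show ?case by simp
next
  case (Suc k)
  let ?S = "\<lambda>k. {is::'d list. set is \<subseteq> UNIV \<and> length is = k}"
  have fin: "finite (?S k)" by (rule finite_lists_length_eq) simp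
  have IH: "iter_dd (replicate k (u, 0)) A =
     (\<lambda>z. \<Sum>is\<in>?S k. complex_of_real (\<Prod>i\<leftarrow>is. u$i) * iter_dd (Edir is) A z)"
    using Suc by (intro ext) simp
  have "iter_dd (replicate (Suc k) (u, 0)) A z = dirderiv (u,0) (iter_dd (replicate k (u, 0)) A) z"
    by simp
  also have "\<dots> = (\<Sum>is\<in>?S k. complex_of_real (\<Prod>i\<leftarrow>is. u$i) * dirderiv (u,0) (iter_dd (Edir is) A) z)"
    unfolding IH by (rule dd_sum[OF fin smooth_diff[OF sm]])
  also have "\<dots> = (\<Sum>is\<in>?S k. complex_of_real (\<Prod>i\<leftarrow>is. u$i) *
         (\<Sum>i\<in>UNIV. complex_of_real (u$i) * iter_dd (Edir (i#is)) A z))"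
    by (subst pair_expansion, subst dd_lin[OF smooth_diff[OF sm]]) simp_all
  also have "\<dots> = (\<Sum>is\<in>?S k. \<Sum>i\<in>UNIV. complex_of_real (\<Prod>j\<leftarrow>i#is. u$j) * iter_dd (Edir (i#is)) A z)"
    by (simp add: sum_distrib_left mult.assoc mult.left_commute)
  also have "\<dots> = (\<Sum>p\<in>?S k \<times> UNIV. complex_of_real (\<Prod>j\<leftarrow>(snd p)#(fst p). u$j) * iter_dd (Edir ((snd p)#(fst p))) A z)"
    by (simp add: sum.cartesian_product')
  also have "\<dots> = (\<Sum>is\<in>?S (Suc k). complex_of_real (\<Prod>j\<leftarrow>is. u$j) * iter_dd (Edir is) A z)"
    unfolding lists_length_Suc_eq
    by (subst sum.reindex) (auto simp: inj_on_def case_prod_beta)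
  finally show ?case .
qed



lemma taylor_re:
  fixes g :: "nat \<Rightarrow> real \<Rightarrow> real"
  assumes "\<And>i t. i \<le> n \<Longrightarrow> t \<in> {0..1} \<Longrightarrow> (g i has_real_derivative g (Suc i) t) (at t)"
    "\<And>t. t\<in>{0..1} \<Longrightarrow> \<bar>g (Suc n) t\<bar> \<le> B"
  shows "\<bar>g 0 1 - (\<Sum>i\<le>n. g i 0 / fact i)\<bar> \<le> B"
proof -
  have "norm (g 0 1 - (\<Sum>i\<le>n. g i 0 * (1-0) ^ i / (fact i))) \<le> B * norm (1 - (0::real))^(Suc n) / fact n"
    apply (rule field_Taylor[where S="{0..1}"])
    subgoal by simp
    subgoal for i x by (rule has_field_derivative_at_within, rule assms(1)) auto
    using assms(2) by auto
  moreover have "B \<ge> 0" using assms(2)[of 0] by auto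
  moreover have "B / fact n \<le> B" using \<open>B \<ge> 0\<close>
    by (simp add: divide_le_eq fact_ge_1 mult_le_cancel_left1)
  ultimately show ?thesis by simp
qed

lemma Re_div_fact: "Re (z / fact i) = Re z / fact i"
  by (metis Re_divide_of_real of_real_fact)
lemma Im_div_fact: "Im (z / fact i) = Im z / fact i"
  by (metis Im_divide_of_real of_real_fact)

lemma taylor_c:
  fixes G :: "nat \<Rightarrow> real \<Rightarrow> complex"
  assumes d: "\<And>i t. i \<le> n \<Longrightarrow> t \<in> {0..1} \<Longrightarrow> (G i has_vector_derivative G (Suc i) t) (at t)"
    and b: "\<And>t. t\<in>{0..1} \<Longrightarrow> cmod (G (Suc n) t) \<le> B"
  shows "cmod (G 0 1 - (\<Sum>i\<le>n. G i 0 / fact i)) \<le> 2*B"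
proof -
  have r: "\<bar>Re (G 0 1) - (\<Sum>i\<le>n. Re (G i 0) / fact i)\<bar> \<le> B"
    apply (rule taylor_re[where g="\<lambda>i t. Re (G i t)"])
    subgoal for i t using d[of i t] by (simp add: has_vector_derivative_complex_iff)
    subgoal for t using b[of t] abs_Re_le_cmod[of "G (Suc n) t"] by linarith
    done
  have i: "\<bar>Im (G 0 1) - (\<Sum>i\<le>n. Im (G i 0) / fact i)\<bar> \<le> B"
    apply (rule taylor_re[where g="\<lambda>i t. Im (G i t)"])
    subgoal for i t using d[of i t] by (simp add: has_vector_derivative_complex_iff)
    subgoal for t using b[of t] abs_Im_le_cmod[of "G (Suc n) t"] by linarith
    done
  have "Re (G 0 1 - (\<Sum>i\<le>n. G i 0 / fact i)) = Re (G 0 1) - (\<Sum>i\<le>n. Re (G i 0) / fact i)"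
    by (simp only: minus_complex.sel Re_sum Re_div_fact)
  moreover have "Im (G 0 1 - (\<Sum>i\<le>n. G i 0 / fact i)) = Im (G 0 1) - (\<Sum>i\<le>n. Im (G i 0) / fact i)"
    by (simp only: minus_complex.sel Im_sum Im_div_fact)
  ultimately show ?thesis using r i cmod_le[of "G 0 1 - (\<Sum>i\<le>n. G i 0 / fact i)"] by linarith
qed



lemma g_deriv:
  assumes sm: "smooth_fun A"
  shows "((\<lambda>t. iter_dd vs A (z + t *\<^sub>R w)) has_vector_derivative iter_dd (w # vs) A (z + t *\<^sub>R w)) (at t)"
proof -
  obtain F' where F': "(iter_dd vs A has_derivative F') (at (z + t *\<^sub>R w))"
    using smooth_diff[OF sm] unfolding differentiable_def by metis
  show ?thesis using dd_vd[OF F'] dd_eq[OF F'] by simp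
qed

lemma prod_list_bound:
  fixes u :: "real^'d::finite"
  assumes "\<And>i. \<bar>u$i\<bar> \<le> h"
  shows "\<bar>\<Prod>i\<leftarrow>is. u$i\<bar> \<le> h ^ length is"
proof (induction "is")
  case Nil then show ?case by simp
next
  case (Cons i "is")
  have "0 \<le> h" using assms[of i] by simp
  have "\<bar>\<Prod>j\<leftarrow>i#is. u$j\<bar> = \<bar>u$i\<bar> * \<bar>\<Prod>j\<leftarrow>is. u$j\<bar>" by (simp add: abs_mult)
  also have "\<dots> \<le> h * h ^ length is"
    by (rule mult_mono) (use assms Cons \<open>0 \<le> h\<close> in auto)
  finally show ?case by simp
qed

lemma local_est:
  fixes a :: "real^'d::finite \<Rightarrow> real^'d \<Rightarrow> complex"
  assumes sm: "smooth_fun (\<lambda>(x,\<xi>). a x \<xi>)"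
    and Cf: "\<And>is p. cmod (iter_dd (Edir is) (\<lambda>(x,\<xi>). a x \<xi>) p) \<le> Cf is"
    and h: "\<And>i. \<bar>(x - q)$i\<bar> \<le> h"
  shows "cmod (a x \<xi> - (\<Sum>k\<le>n. \<Sum>is\<in>{is. set is \<subseteq> UNIV \<and> length is = k}.
            complex_of_real (\<Prod>i\<leftarrow>is. (x-q)$i) * iter_dd (Edir is) (\<lambda>(x,\<xi>). a x \<xi>) (q,\<xi>) / fact k))
         \<le> 2 * (h^(Suc n) * (\<Sum>is\<in>{is. set is \<subseteq> UNIV \<and> length is = Suc n}. Cf is))"
proof -
  let ?A = "\<lambda>(x,\<xi>). a x \<xi>"
  let ?S = "\<lambda>k. {is::'d list. set is \<subseteq> UNIV \<and> length is = k}"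
  have h0: "0 \<le> h" using h[of undefined] by linarith
  define u where "u = x - q"
  define w where "w = (u, 0::real^'d)"
  define z0 where "z0 = (q, \<xi>)"
  define G where "G = (\<lambda>k t. iter_dd (replicate k w) ?A (z0 + t *\<^sub>R w))"
  have d: "(G i has_vector_derivative G (Suc i) t) (at t)" for i t
    unfolding G_def using g_deriv[OF sm] by simp
  have b: "cmod (G (Suc n) t) \<le> h^(Suc n) * (\<Sum>is\<in>?S (Suc n). Cf is)" for t
  proof -
    have "G (Suc n) t = (\<Sum>is\<in>?S (Suc n). complex_of_real (\<Prod>i\<leftarrow>is. u$i) * iter_dd (Edir is) ?A (z0 + t *\<^sub>R w))"
      unfolding G_def w_def by (rule expand[OF sm])
    also have "cmod \<dots> \<le> (\<Sum>is\<in>?S (Suc n). cmod (complex_of_real (\<Prod>i\<leftarrow>is. u$i) * iter_dd (Edir is) ?A (z0 + t *\<^sub>R w)))"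
      by (rule norm_sum)
    also have "\<dots> \<le> (\<Sum>is\<in>?S (Suc n). h^(Suc n) * Cf is)"
    proof (rule sum_mono)
      fix "is" assume "is \<in> ?S (Suc n)"
      then have "\<bar>\<Prod>i\<leftarrow>is. u$i\<bar> \<le> h^(Suc n)" using prod_list_bound[of u h "is"] h u_def by auto
      then show "cmod (complex_of_real (\<Prod>i\<leftarrow>is. u$i) * iter_dd (Edir is) ?A (z0 + t *\<^sub>R w)) \<le> h^(Suc n) * Cf is"
        unfolding norm_mult norm_of_real by (rule mult_mono) (use Cf[of "is"] h0 in auto)
    qed
    finally show ?thesis by (simp add: sum_distrib_left)
  qed
  have "cmod (G 0 1 - (\<Sum>k\<le>n. G k 0 / fact k)) \<le> 2 * (h^(Suc n) * (\<Sum>is\<in>?S (Suc n). Cf is))"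
    by (rule taylor_c) (use d b in auto)
  moreover have "G 0 1 = a x \<xi>" unfolding G_def z0_def w_def u_def by simp
  moreover have "G k 0 / fact k = (\<Sum>is\<in>?S k. complex_of_real (\<Prod>i\<leftarrow>is. (x-q)$i) * iter_dd (Edir is) ?A (q,\<xi>) / fact k)" for k
    unfolding G_def w_def using expand[OF sm, of k u z0] by (simp add: sum_divide_distrib z0_def u_def)
  ultimately show ?thesis by simp
qed



lemma sep_finite:
  assumes "finite T" "\<And>x \<xi>. cmod (f x \<xi> - (\<Sum>t\<in>T. c t x * d t \<xi>)) \<le> \<epsilon>"
  shows "sep_approx f \<epsilon> (card T)"
proof -
  obtain g where g: "bij_betw g {0..<card T} T" using ex_bij_betw_nat_finite[OF assms(1)] by blast
  have "(\<Sum>n<card T. c (g n) x * d (g n) \<xi>) = (\<Sum>t\<in>T. c t x * d t \<xi>)" for x \<xi>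
    using sum.reindex_bij_betw[OF g, of "\<lambda>t. c t x * d t \<xi>"] by (simp add: atLeast0LessThan)
  then show ?thesis unfolding sep_approx_def using assms(2)
    by (intro exI[of _ "\<lambda>n. c (g n)"] exI[of _ "\<lambda>n. d (g n)"]) simp
qed

lemma rank_le: "sep_approx f \<epsilon> r \<Longrightarrow> sep_rank f \<epsilon> \<le> r"
  unfolding sep_rank_def by (rule Least_le)

definition grid :: "real \<Rightarrow> real^'d::finite \<Rightarrow> real^'d" where
  "grid h x = (\<chi> i. h * of_int \<lfloor>x$i / h\<rfloor>)"

lemma grid_close:
  assumes "h > 0" shows "\<bar>(x - grid h x)$i\<bar> \<le> h"
proof -
  have a: "of_int \<lfloor>x$i / h\<rfloor> \<le> x$i / h" by (rule of_int_floor_le)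
  have b: "x$i / h < of_int \<lfloor>x$i / h\<rfloor> + 1" by (rule real_of_int_floor_add_one_gt)
  have "h * of_int \<lfloor>x$i / h\<rfloor> \<le> x$i" using mult_left_mono[OF a, of h] assms by simp
  moreover have "x$i < h * of_int \<lfloor>x$i / h\<rfloor> + h" using mult_strict_left_mono[OF b assms] assms
    by (simp add: distrib_left)
  ultimately show ?thesis by (simp add: grid_def)
qed

lemma grid_card:
  fixes K :: "(real^'d::finite) set"
  assumes h: "h > 0" and R: "R \<ge> 0" and K: "\<And>x i. x \<in> K \<Longrightarrow> \<bar>x$i\<bar> \<le> R"
  shows "finite (grid h ` K)" "real (card (grid h ` K)) \<le> (2*R/h + 3) ^ CARD('d)"
proof -
  define N where "N = \<lceil>R/h\<rceil>"
  define P where "P = (\<Pi>\<^sub>E i\<in>(UNIV::'d set). {-N..N})"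
  have sub: "grid h ` K \<subseteq> (\<lambda>k. \<chi> i. h * of_int (k i)) ` P"
  proof
    fix y assume "y \<in> grid h ` K"
    then obtain x where x: "x \<in> K" "y = grid h x" by auto
    have "\<lfloor>x$i / h\<rfloor> \<in> {-N..N}" for i
    proof -
      have "-R/h \<le> x$i/h" "x$i/h \<le> R/h" using K[OF x(1), of i] h
        by (auto simp: divide_right_mono field_simps abs_le_iff)
      then have "\<lfloor>-R/h\<rfloor> \<le> \<lfloor>x$i/h\<rfloor>" "\<lfloor>x$i/h\<rfloor> \<le> \<lfloor>R/h\<rfloor>" by (auto intro: floor_mono)
      moreover have "\<lfloor>R/h\<rfloor> \<le> N" unfolding N_def by (rule floor_le_ceiling)
      moreover have "\<lfloor>-R/h\<rfloor> = -N" unfolding N_def by (simp add: floor_minus)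
      ultimately show ?thesis by auto
    qed
    then have "(\<lambda>i. \<lfloor>x$i / h\<rfloor>) \<in> P" unfolding P_def by (auto simp: PiE_UNIV_domain)
    then show "y \<in> (\<lambda>k. \<chi> i. h * of_int (k i)) ` P" unfolding x(2) grid_def by auto
  qed
  have finP: "finite P" unfolding P_def by (rule finite_PiE) auto
  show "finite (grid h ` K)" using sub finP finite_subset by blast
  have "card (grid h ` K) \<le> card P" using sub finP card_image_le card_mono
    by (metis (no_types, lifting) finite_imageI le_trans)
  also have "card P = nat (2*N+1) ^ CARD('d)" unfolding P_def by (simp add: card_PiE)
  finally have "real (card (grid h ` K)) \<le> real (nat (2*N+1)) ^ CARD('d)"
    by (metis of_nat_le_iff of_nat_power)
  also have "\<dots> \<le> (2*R/h + 3) ^ CARD('d)"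
  proof (rule power_mono)
    have "R/h \<ge> 0" using R h by simp
    then have "N \<ge> 0" unfolding N_def by simp
    have "real_of_int N \<le> R/h + 1" unfolding N_def by linarith
    then show "real (nat (2*N+1)) \<le> 2*R/h + 3" using \<open>N \<ge> 0\<close> by simp
  qed simp
  finally show "real (card (grid h ` K)) \<le> (2*R/h + 3) ^ CARD('d)" .
qed



lemma approx_h:
  fixes a :: "real^'d::finite \<Rightarrow> real^'d \<Rightarrow> complex" and K :: "(real^'d) set"
  assumes sm: "smooth_fun (\<lambda>(x,\<xi>). a x \<xi>)"
    and Cf: "\<And>is p. cmod (iter_dd (Edir is) (\<lambda>(x,\<xi>). a x \<xi>) p) \<le> Cf is"
    and Kz: "\<And>x \<xi>. x \<notin> K \<Longrightarrow> a x \<xi> = 0"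
    and Kb: "\<And>x i. x \<in> K \<Longrightarrow> \<bar>x$i\<bar> \<le> R" and R: "R \<ge> 0" and h: "h > 0"
  shows "sep_approx a (2 * (h^(Suc n) * (\<Sum>is\<in>{is. set is \<subseteq> UNIV \<and> length is = Suc n}. Cf is)))
           (card (grid h ` K) * card (SIGMA k:{..n}. {is::'d list. set is \<subseteq> UNIV \<and> length is = k}))"
proof -
  let ?A = "\<lambda>(x,\<xi>). a x \<xi>"
  let ?S = "\<lambda>k. {is::'d list. set is \<subseteq> UNIV \<and> length is = k}"
  let ?Q = "grid h ` K"
  let ?I = "SIGMA k:{..n}. ?S k"
  let ?B = "2 * (h^(Suc n) * (\<Sum>is\<in>?S (Suc n). Cf is))"
  have finQ: "finite ?Q" by (rule grid_card(1)[OF h R Kb])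
  have finS: "finite (?S k)" for k by (rule finite_lists_length_eq) simp
  have finI: "finite ?I" using finS by auto
  have Cf0: "0 \<le> Cf is" for "is" using Cf[of "is"] norm_ge_zero order_trans by blast
  have B0: "0 \<le> ?B" using h Cf0 by (simp add: sum_nonneg)
  define c where "c = (\<lambda>(q, k, is) x. if x \<in> K \<and> grid h x = q
      then complex_of_real (\<Prod>i\<leftarrow>is. (x-q)$i) / fact k else (0::complex))"
  define d where "d = (\<lambda>(q::real^'d, k::nat, is) \<xi>. iter_dd (Edir is) ?A (q, \<xi>))"
  have "sep_approx a ?B (card (?Q \<times> ?I))"
  proof (rule sep_finite)
    show "finite (?Q \<times> ?I)" using finQ finI by simp
    fix x \<xi>
    show "cmod (a x \<xi> - (\<Sum>t\<in>?Q \<times> ?I. c t x * d t \<xi>)) \<le> ?B"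
    proof (cases "x \<in> K")
      case False
      then show ?thesis using Kz[OF False] B0 by (simp add: c_def case_prod_beta)
    next
      case True
      let ?q = "grid h x"
      have qQ: "?q \<in> ?Q" using True by simp
      have "(\<Sum>t\<in>?Q \<times> ?I. c t x * d t \<xi>) = (\<Sum>q\<in>?Q. \<Sum>t\<in>?I. c (q, t) x * d (q, t) \<xi>)"
        by (simp add: sum.cartesian_product')
      also have "\<dots> = (\<Sum>q\<in>?Q. if q = ?q then (\<Sum>t\<in>?I. c (q, t) x * d (q, t) \<xi>) else 0)"
      proof (rule sum.cong[OF refl])
        fix q show "(\<Sum>t\<in>?I. c (q, t) x * d (q, t) \<xi>) = (if q = ?q then (\<Sum>t\<in>?I. c (q, t) x * d (q, t) \<xi>) else 0)"
          by (cases "q = ?q") (auto simp: c_def case_prod_beta)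
      qed
      also have "\<dots> = (\<Sum>t\<in>?I. c (?q, t) x * d (?q, t) \<xi>)"
        using finQ qQ by simp
      also have "\<dots> = (\<Sum>k\<le>n. \<Sum>is\<in>?S k. c (?q, k, is) x * d (?q, k, is) \<xi>)"
        using sum.Sigma[of "{..n}" ?S "\<lambda>k is. c (?q,k,is) x * d (?q,k,is) \<xi>"] finS
        by (simp add: case_prod_beta)
      also have "\<dots> = (\<Sum>k\<le>n. \<Sum>is\<in>?S k. complex_of_real (\<Prod>i\<leftarrow>is. (x-?q)$i) * iter_dd (Edir is) ?A (?q,\<xi>) / fact k)"
        using True by (simp add: c_def d_def del: vector_minus_component)
      finally have eq: "(\<Sum>t\<in>?Q \<times> ?I. c t x * d t \<xi>) = \<dots>" .
      show ?thesis unfolding eq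
        by (rule local_est[OF sm Cf]) (rule grid_close[OF h])
    qed
  qed
  then show ?thesis by (simp add: card_cartesian_product)
qed



theorem lemma2:
  fixes a :: "real^'d::finite \<Rightarrow> real^'d \<Rightarrow> complex"
  assumes "symbol_S0_10 a"
    and "compact_supp_x a"
  shows "\<forall>M>0. \<exists>C>0. \<forall>\<epsilon>>0. real (sep_rank a \<epsilon>) \<le> C * \<epsilon> powr (- 1 / M)"
proof (intro allI impI)
  fix M :: real assume M: "M > 0"
  let ?A = "\<lambda>(x,\<xi>). a x \<xi>"
  let ?S = "\<lambda>k. {is::'d list. set is \<subseteq> UNIV \<and> length is = k}"
  have sm: "smooth_fun ?A" using assms(1) unfolding symbol_S0_10_def by simp
  have "\<forall>is. \<exists>C>0. \<forall>x \<xi>. cmod (mixed_partial [] is a x \<xi>)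
         \<le> C * (1 + norm \<xi> ^ 2) powr (- real (length ([]::'d list)) / 2)"
    using assms(1) unfolding symbol_S0_10_def by blast
  then obtain Cf where Cf0: "\<And>is. Cf is > 0" and
    Cf1: "\<And>is x \<xi>. cmod (mixed_partial [] is a x \<xi>) \<le> Cf is * (1 + norm \<xi> ^ 2) powr (- real (length ([]::'d list)) / 2)"
    by metis
  have Cf: "cmod (iter_dd (Edir is) ?A p) \<le> Cf is" for "is" p
  proof -
    have "1 + norm (snd p) ^ 2 > 0" by (simp add: add_pos_nonneg)
    then have "(1 + norm (snd p) ^ 2) powr (- real (length ([]::'d list)) / 2) = 1"
      by simp
    then show ?thesis using Cf1[of "is" "fst p" "snd p"] by (simp add: mixed_partial_def case_prod_beta)
  qed
  have ab: "cmod (a x \<xi>) \<le> Cf []" for x \<xi> using Cf[of "[]" "(x,\<xi>)"] by simp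
  obtain K where K: "compact K" and Kz: "\<And>x \<xi>. x \<notin> K \<Longrightarrow> a x \<xi> = 0"
    using assms(2) unfolding compact_supp_x_def by blast
  obtain R0 where R0: "\<And>x. x \<in> K \<Longrightarrow> norm x \<le> R0"
    using compact_imp_bounded[OF K] unfolding bounded_iff by blast
  define R where "R = max R0 0"
  have R: "R \<ge> 0" unfolding R_def by simp
  have Kb: "\<bar>x$i\<bar> \<le> R" if "x \<in> K" for x i
    using component_le_norm_cart[of x i] R0[OF that] unfolding R_def by linarith
  define D where "D = CARD('d)"
  define n where "n = nat \<lceil>real D * M\<rceil>"
  have DMn: "real D * M \<le> real (Suc n)" unfolding n_def by linarith
  have Dm: "real D / real (Suc n) \<le> 1 / M" using DMn M by (simp add: field_simps)
  define CS where "CS = (\<Sum>is\<in>?S (Suc n). Cf is)"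
  have CS0: "CS \<ge> 0" unfolding CS_def using Cf0 by (simp add: sum_nonneg less_imp_le)
  define L0 where "L0 = card (SIGMA k:{..n}. ?S k)"
  define E0 where "E0 = max 1 (max (Cf []) (2*CS))"
  have E0: "E0 \<ge> 1" "E0 \<ge> Cf []" "E0 \<ge> 2*CS" unfolding E0_def by auto
  define C where "C = real L0 * (2*R+3)^D * E0 powr (1/M) + 1"
  have C1: "0 \<le> real L0 * (2*R+3)^D * E0 powr (1/M)" using R by (intro mult_nonneg_nonneg zero_le_power) auto
  have C0: "C > 0" unfolding C_def using C1 by linarith
  show "\<exists>C>0. \<forall>\<epsilon>>0. real (sep_rank a \<epsilon>) \<le> C * \<epsilon> powr (- 1 / M)"
  proof (intro exI[of _ C] conjI allI impI C0)
    fix \<epsilon> :: real assume eps: "\<epsilon> > 0"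
    show "real (sep_rank a \<epsilon>) \<le> C * \<epsilon> powr (- 1 / M)"
    proof (cases "\<epsilon> \<ge> Cf []")
      case True
      have "sep_approx a \<epsilon> 0" unfolding sep_approx_def using ab True order_trans by fastforce
      then have "sep_rank a \<epsilon> = 0" using rank_le by fastforce
      then show ?thesis using C0 by simp
    next
      case False
      then have epsE: "\<epsilon> < E0" using E0 by linarith
      define \<rho> where "\<rho> = (E0/\<epsilon>) powr (1 / real (Suc n))"
      have \<rho>1: "\<rho> \<ge> 1" unfolding \<rho>_def using epsE eps by (intro ge_one_powr_ge_zero) auto
      define h where "h = 1 / \<rho>"
      have h: "h > 0" "h \<le> 1" unfolding h_def using \<rho>1 by auto
      have \<rho>pow: "\<rho> ^ Suc n = E0/\<epsilon>"
        unfolding \<rho>_def using eps E0 by (subst powr_power) auto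
      have hpow: "h ^ Suc n = \<epsilon>/E0" unfolding h_def power_one_over \<rho>pow by simp
      have err: "2 * (h^(Suc n) * CS) \<le> \<epsilon>"
      proof -
        have "2 * (h^(Suc n) * CS) = (2*CS) * \<epsilon> / E0" unfolding hpow by simp
        also have "\<dots> \<le> E0 * \<epsilon> / E0"
          using E0 eps by (intro divide_right_mono mult_right_mono) auto
        also have "\<dots> = \<epsilon>" using E0 by simp
        finally show ?thesis .
      qed
      have sa: "sep_approx a \<epsilon> (card (grid h ` K) * L0)"
        using approx_h[OF sm Cf Kz Kb R h(1), where n=n] err unfolding sep_approx_def CS_def L0_def
        by (meson order_trans)
      have "real (sep_rank a \<epsilon>) \<le> real (card (grid h ` K)) * real L0"
        using rank_le[OF sa] by (metis of_nat_le_iff of_nat_mult)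
      also have "\<dots> \<le> (2*R/h + 3) ^ D * real L0"
        using grid_card(2)[OF h(1) R Kb] unfolding D_def by (intro mult_right_mono) auto
      also have "\<dots> \<le> ((2*R+3) * \<rho>) ^ D * real L0"
      proof (intro mult_right_mono power_mono)
        show "2*R/h + 3 \<le> (2*R+3) * \<rho>" unfolding h_def using \<rho>1 R by (simp add: algebra_simps)
      qed (use h R in auto)
      also have "\<dots> = real L0 * (2*R+3)^D * \<rho>^D" by (simp add: power_mult_distrib)
      also have "\<rho>^D = (E0/\<epsilon>) powr (real D / real (Suc n))"
        unfolding \<rho>_def using eps E0 by (subst powr_power) auto
      also have "\<dots> \<le> (E0/\<epsilon>) powr (1/M)"
        using Dm epsE eps by (intro powr_mono) auto
      also have "\<dots> = E0 powr (1/M) * \<epsilon> powr (- 1 / M)"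
      proof -
        have e1: "\<epsilon> powr (- 1 / M) = 1 / \<epsilon> powr (1/M)"
          using powr_minus_divide[of \<epsilon> "1/M"] by simp
        show ?thesis unfolding powr_divide e1 by simp
      qed
      finally have "real (sep_rank a \<epsilon>) \<le> (real L0 * (2*R+3)^D * E0 powr (1/M)) * \<epsilon> powr (- 1 / M)"
        using R by (simp add: mult_left_mono mult.assoc)
      also have "\<dots> \<le> C * \<epsilon> powr (- 1 / M)"
        unfolding C_def by (intro mult_right_mono) auto
      finally show ?thesis .
    qed
  qed
qed

end
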